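(* Let $H$ be a complex separable Hilbert space and let $S,T\in B(H)$ be normal Hilbert–Schmidt operators such that the product $ST$ is normal. Then $\|ST\|_2\le\|TS\|_2$.
   Context: $\|\cdot\|_2$ denotes the Hilbert–Schmidt norm, $\|Z\|_2=(\operatorname{tr}(Z^*Z))^{1/2}$, and $S,T$ belong to the Hilbert–Schmidt class (the norm ideal associated with $\|\cdot\|_2$). *)

theory Defs
  imports "HOL-Analysis.Analysis"
begin

text \<open>A complex separable Hilbert space is modelled (up to unitary equivalence) as
  l2(I) for a countable index type I (orthonormal basis indexed by I).  A bounded
  operator is represented by its matrix with respect to this basis, A i j = <A e_j, e_i>.\<close>

type_synonym 'i cmat = "'i \<Rightarrow> 'i \<Rightarrow> complex"

definition hilbert_schmidt :: "'i cmat \<Rightarrow> bool" where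
  "hilbert_schmidt A \<longleftrightarrow> (\<lambda>(i,j). (cmod (A i j))\<^sup>2) summable_on UNIV"

definition hs_norm :: "'i cmat \<Rightarrow> real" where
  "hs_norm A = sqrt (\<Sum>\<^sub>\<infinity>(i,j). (cmod (A i j))\<^sup>2)"

text \<open>Operator composition in matrix form (for Hilbert-Schmidt matrices the sums
  converge absolutely).\<close>
definition mcomp :: "'i cmat \<Rightarrow> 'i cmat \<Rightarrow> 'i cmat" where
  "mcomp A B = (\<lambda>i k. \<Sum>\<^sub>\<infinity>j. A i j * B j k)"

definition madj :: "'i cmat \<Rightarrow> 'i cmat" where
  "madj A = (\<lambda>i j. cnj (A j i))"

definition normal_op :: "'i cmat \<Rightarrow> bool" where
  "normal_op A \<longleftrightarrow> mcomp A (madj A) = mcomp (madj A) A"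

end

theory Submission
  imports Defs
begin

lemma prod_abs_summable:
  fixes f g :: "_ \<Rightarrow> 'a::{real_normed_field, banach}"
  assumes "(\<lambda>x. norm (f x)) summable_on A" "(\<lambda>x. norm (g x)) summable_on B"
  shows "(\<lambda>(x,y). norm (f x * g y)) summable_on A \<times> B"
proof -
  have "(\<forall>x\<in>A. (\<lambda>y. norm (f x * g y)) summable_on B) \<and>
        ((\<lambda>x. norm (\<Sum>\<^sub>\<infinity>y\<in>B. norm (f x * g y))) summable_on A)"
    using assms
    by (auto intro!: summable_on_cmult_left summable_on_cmult_right simp: norm_mult infsum_cmult_right infsum_nonneg)
  then show ?thesis
    using Infinite_Sum.abs_summable_on_Sigma_iff[of "\<lambda>(x,y). f x * g y" A "\<lambda>_. B"]
    by (simp add: case_prod_unfold)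
qed

lemma prod_infsum:
  fixes f g :: "_ \<Rightarrow> 'a::{real_normed_field, banach}"
  assumes "(\<lambda>x. norm (f x)) summable_on A" "(\<lambda>x. norm (g x)) summable_on B"
  shows "infsum (\<lambda>(x,y). f x * g y) (A \<times> B) = infsum f A * infsum g B"
proof -
  have s: "(\<lambda>(x,y). f x * g y) summable_on A \<times> B"
    using Infinite_Sum.abs_summable_summable[of "\<lambda>(x,y). f x * g y" "A \<times> B"] prod_abs_summable[OF assms]
    by (simp add: case_prod_unfold)
  have "infsum (\<lambda>(x,y). f x * g y) (A \<times> B) = infsum (\<lambda>x. infsum (\<lambda>y. f x * g y) B) A"
    using infsum_Sigma'_banach[of "\<lambda>x y. f x * g y" A "\<lambda>_. B"] s by simp
  also have "\<dots> = infsum (\<lambda>x. f x * infsum g B) A"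
    by (simp add: infsum_cmult_right Infinite_Sum.abs_summable_summable assms)
  also have "\<dots> = infsum f A * infsum g B"
    by (simp add: infsum_cmult_left Infinite_Sum.abs_summable_summable assms)
  finally show ?thesis .
qed

lemma cs_infsum:
  fixes a b :: "_ \<Rightarrow> real"
  assumes "(\<lambda>x. (a x)\<^sup>2) summable_on A" "(\<lambda>x. (b x)\<^sup>2) summable_on A"
    and "\<And>x. a x \<ge> 0" "\<And>x. b x \<ge> 0"
  shows "(\<lambda>x. a x * b x) summable_on A"
    and "(infsum (\<lambda>x. a x * b x) A)\<^sup>2 \<le> infsum (\<lambda>x. (a x)\<^sup>2) A * infsum (\<lambda>x.(b x)\<^sup>2) A"
proof -
  have aa: "(\<lambda>x. norm (a x * a x)) summable_on A" using assms(1,3) by (simp add: power2_eq_square)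
  have bb: "(\<lambda>x. norm (b x * b x)) summable_on A" using assms(2,4) by (simp add: power2_eq_square)
  have ab: "(\<lambda>x. norm (a x * b x)) summable_on A" by (rule Infinite_Sum.abs_summable_product[OF aa bb])
  then show s: "(\<lambda>x. a x * b x) summable_on A" by (rule Infinite_Sum.abs_summable_summable)
  have "infsum (\<lambda>x. a x * b x) A \<le> sqrt (infsum (\<lambda>x. (a x)\<^sup>2) A) * sqrt (infsum (\<lambda>x.(b x)\<^sup>2) A)"
  proof (rule infsum_le_finite_sums[OF s])
    fix F assume F: "finite F" "F \<subseteq> A"
    have "(\<Sum>x\<in>F. a x * b x)\<^sup>2 \<le> (\<Sum>x\<in>F. (a x)\<^sup>2) * (\<Sum>x\<in>F. (b x)\<^sup>2)"
      by (rule Cauchy_Schwarz_ineq_sum)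
    also have "\<dots> \<le> infsum (\<lambda>x. (a x)\<^sup>2) A * infsum (\<lambda>x.(b x)\<^sup>2) A"
      by (intro mult_mono finite_sum_le_infsum assms F sum_nonneg infsum_nonneg) auto
    finally have "(\<Sum>x\<in>F. a x * b x) \<le> sqrt (infsum (\<lambda>x. (a x)\<^sup>2) A * infsum (\<lambda>x.(b x)\<^sup>2) A)"
      using real_le_rsqrt by blast
    then show "(\<Sum>x\<in>F. a x * b x) \<le> sqrt (infsum (\<lambda>x. (a x)\<^sup>2) A) * sqrt (infsum (\<lambda>x.(b x)\<^sup>2) A)"
      by (simp add: real_sqrt_mult)
  qed
  moreover have "0 \<le> infsum (\<lambda>x. a x * b x) A" by (intro infsum_nonneg) (simp add: assms)
  ultimately have "(infsum (\<lambda>x. a x * b x) A)\<^sup>2 \<le> (sqrt (infsum (\<lambda>x. (a x)\<^sup>2) A) * sqrt (infsum (\<lambda>x.(b x)\<^sup>2) A))\<^sup>2"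
    by (rule power_mono)
  also have "\<dots> = infsum (\<lambda>x. (a x)\<^sup>2) A * infsum (\<lambda>x.(b x)\<^sup>2) A"
    by (simp add: power_mult_distrib infsum_nonneg)
  finally show "(infsum (\<lambda>x. a x * b x) A)\<^sup>2 \<le> infsum (\<lambda>x. (a x)\<^sup>2) A * infsum (\<lambda>x.(b x)\<^sup>2) A" .
qed

lemma hs_rows:
  assumes "hilbert_schmidt A"
  shows "(\<lambda>j. (cmod (A i j))\<^sup>2) summable_on UNIV"
    and "(\<lambda>i. \<Sum>\<^sub>\<infinity>j. (cmod (A i j))\<^sup>2) summable_on UNIV"
proof -
  have "(\<lambda>(i,j). norm ((cmod (A i j))\<^sup>2)) summable_on UNIV \<times> UNIV"
    using assms unfolding hilbert_schmidt_def by simp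
  then have "(\<forall>i\<in>UNIV. (\<lambda>j. norm ((cmod (A i j))\<^sup>2)) summable_on UNIV) \<and>
     ((\<lambda>i. norm (\<Sum>\<^sub>\<infinity>j. norm ((cmod (A i j))\<^sup>2))) summable_on UNIV)"
    using Infinite_Sum.abs_summable_on_Sigma_iff[of "\<lambda>(i,j). (cmod (A i j))\<^sup>2" UNIV "\<lambda>_. UNIV"]
    by (simp add: case_prod_unfold)
  then show "(\<lambda>j. (cmod (A i j))\<^sup>2) summable_on UNIV"
    and "(\<lambda>i. \<Sum>\<^sub>\<infinity>j. (cmod (A i j))\<^sup>2) summable_on UNIV"
    by (auto simp: infsum_nonneg)
qed

lemma hs_cols:
  assumes "hilbert_schmidt A"
  shows "(\<lambda>i. (cmod (A i j))\<^sup>2) summable_on UNIV"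
    and "(\<lambda>j. \<Sum>\<^sub>\<infinity>i. (cmod (A i j))\<^sup>2) summable_on UNIV"
proof -
  have "hilbert_schmidt (\<lambda>j i. A i j)"
    using assms unfolding hilbert_schmidt_def
    by (subst (asm) UNIV_Times_UNIV[symmetric], subst (asm) summable_on_swap) simp
  from hs_rows[OF this] show "(\<lambda>i. (cmod (A i j))\<^sup>2) summable_on UNIV"
    and "(\<lambda>j. \<Sum>\<^sub>\<infinity>i. (cmod (A i j))\<^sup>2) summable_on UNIV" by auto
qed

lemma hs_sq:
  fixes A B :: "'i cmat"
  assumes HA: "hilbert_schmidt A" and HB: "hilbert_schmidt B"
  shows "complex_of_real ((hs_norm (mcomp A B))\<^sup>2) =
    (\<Sum>\<^sub>\<infinity>y. mcomp (madj A) A (snd y) (fst y) * mcomp B (madj B) (fst y) (snd y))"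
proof -
  define F :: "'i \<times> 'i \<Rightarrow> 'i \<times> 'i \<Rightarrow> complex" where
    "F x y = A (fst x) (fst y) * B (fst y) (snd x) * cnj (A (fst x) (snd y) * B (snd y) (snd x))" for x y
  define M where "M = mcomp A B"
  define r where "r i = (\<Sum>\<^sub>\<infinity>j. (cmod (A i j))\<^sup>2)" for i
  define c where "c k = (\<Sum>\<^sub>\<infinity>j. (cmod (B j k))\<^sup>2)" for k
  define s where "s i k = (\<Sum>\<^sub>\<infinity>j. norm (A i j * B j k))" for i k
  have ent: "(\<lambda>j. norm (A i j * B j k)) summable_on UNIV" for i k
    using cs_infsum(1)[of "\<lambda>j. cmod (A i j)" UNIV "\<lambda>j. cmod (B j k)"] hs_rows(1)[OF HA] hs_cols(1)[OF HB]
    by (simp add: norm_mult)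
  have ent': "(\<lambda>j. A i j * B j k) summable_on UNIV" for i k
    using ent summable_on_iff_abs_summable_on_complex by blast
  have sle: "(s i k)\<^sup>2 \<le> r i * c k" for i k
    using cs_infsum(2)[of "\<lambda>j. cmod (A i j)" UNIV "\<lambda>j. cmod (B j k)"] hs_rows(1)[OF HA] hs_cols(1)[OF HB]
    by (simp add: norm_mult s_def r_def c_def)
  have rc: "(\<lambda>(i,k). r i * c k) summable_on UNIV \<times> UNIV"
  proof -
    have "(\<lambda>(i,k). norm (r i * c k)) summable_on UNIV \<times> UNIV"
      by (rule prod_abs_summable) (use hs_rows(2)[OF HA] hs_cols(2)[OF HB] in \<open>simp_all add: r_def c_def infsum_nonneg\<close>)
    then show ?thesis
      using Infinite_Sum.abs_summable_summable[of "\<lambda>(i,k). r i * c k" "UNIV \<times> UNIV"]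
      by (simp add: case_prod_unfold)
  qed
  have Fin: "(\<lambda>y. norm (F x y)) summable_on UNIV" for x
  proof -
    have "(\<lambda>(j,l). norm (A (fst x) j * B j (snd x) * cnj (A (fst x) l * B l (snd x)))) summable_on UNIV \<times> UNIV"
      by (rule prod_abs_summable) (use ent[of "fst x" "snd x"] in \<open>simp_all add: norm_mult\<close>)
    then show ?thesis by (simp add: F_def case_prod_unfold)
  qed
  have Finsum: "(\<Sum>\<^sub>\<infinity>y. norm (F x y)) = (s (fst x) (snd x))\<^sup>2" for x
  proof -
    have "(\<Sum>\<^sub>\<infinity>y. norm (F x y)) = (\<Sum>\<^sub>\<infinity>(j,l)\<in>UNIV\<times>UNIV. norm (A (fst x) j * B j (snd x)) * norm (A (fst x) l * B l (snd x)))"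
      by (simp add: F_def case_prod_unfold norm_mult)
    also have "\<dots> = s (fst x) (snd x) * s (fst x) (snd x)"
      unfolding s_def by (rule prod_infsum) (use ent in simp_all)
    finally show ?thesis by (simp add: power2_eq_square)
  qed
  have Fsum: "(\<lambda>(x,y). F x y) summable_on UNIV \<times> UNIV"
  proof -
    have "(\<lambda>x. norm (\<Sum>\<^sub>\<infinity>y. norm (F x y))) summable_on UNIV"
    proof -
      have "(\<lambda>x. (s (fst x) (snd x))\<^sup>2) summable_on UNIV"
        by (rule summable_on_comparison_test[OF rc[simplified]]) (auto simp: case_prod_unfold sle)
      then show ?thesis by (simp add: Finsum)
    qed
    then have "(\<lambda>(x,y). norm (F x y)) summable_on UNIV \<times> UNIV"
      using Infinite_Sum.abs_summable_on_Sigma_iff[of "\<lambda>(x,y). F x y" UNIV "\<lambda>_. UNIV"] Fin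
      by (simp add: case_prod_unfold)
    then show ?thesis
      using summable_on_iff_abs_summable_on_complex[of "\<lambda>(x,y). F x y" "UNIV \<times> UNIV"]
      by (simp add: case_prod_unfold)
  qed
  have E3: "complex_of_real ((cmod (M (fst x) (snd x)))\<^sup>2) = (\<Sum>\<^sub>\<infinity>y. F x y)" for x
  proof -
    have "complex_of_real ((cmod (M (fst x) (snd x)))\<^sup>2) = M (fst x) (snd x) * cnj (M (fst x) (snd x))"
      by (rule complex_norm_square)
    also have "\<dots> = (\<Sum>\<^sub>\<infinity>j. A (fst x) j * B j (snd x)) * (\<Sum>\<^sub>\<infinity>l. cnj (A (fst x) l * B l (snd x)))"
      by (simp add: M_def mcomp_def del: complex_cnj_mult)
    also have "\<dots> = (\<Sum>\<^sub>\<infinity>(j,l)\<in>UNIV\<times>UNIV. A (fst x) j * B j (snd x) * cnj (A (fst x) l * B l (snd x)))"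
      by (rule prod_infsum[symmetric]) (use ent[of "fst x" "snd x"] in \<open>simp_all add: norm_mult\<close>)
    also have "\<dots> = (\<Sum>\<^sub>\<infinity>y. F x y)"
      by (simp add: F_def case_prod_unfold)
    finally show ?thesis .
  qed
  have E5: "(\<Sum>\<^sub>\<infinity>x. F x y) = mcomp (madj A) A (snd y) (fst y) * mcomp B (madj B) (fst y) (snd y)" for y
  proof -
    have "(\<Sum>\<^sub>\<infinity>x. F x y) = (\<Sum>\<^sub>\<infinity>(i,k)\<in>UNIV\<times>UNIV. (cnj (A i (snd y)) * A i (fst y)) * (B (fst y) k * cnj (B (snd y) k)))"
      by (simp add: F_def case_prod_unfold mult_ac)
    also have "\<dots> = (\<Sum>\<^sub>\<infinity>i. cnj (A i (snd y)) * A i (fst y)) * (\<Sum>\<^sub>\<infinity>k. B (fst y) k * cnj (B (snd y) k))"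
    proof (rule prod_infsum)
      show "(\<lambda>i. norm (cnj (A i (snd y)) * A i (fst y))) summable_on UNIV"
        using cs_infsum(1)[of "\<lambda>i. cmod (A i (snd y))" UNIV "\<lambda>i. cmod (A i (fst y))"] hs_cols(1)[OF HA]
        by (simp add: norm_mult)
      show "(\<lambda>k. norm (B (fst y) k * cnj (B (snd y) k))) summable_on UNIV"
        using cs_infsum(1)[of "\<lambda>k. cmod (B (fst y) k)" UNIV "\<lambda>k. cmod (B (snd y) k)"] hs_rows(1)[OF HB]
        by (simp add: norm_mult)
    qed
    also have "\<dots> = mcomp (madj A) A (snd y) (fst y) * mcomp B (madj B) (fst y) (snd y)"
      by (simp add: mcomp_def madj_def)
    finally show ?thesis .
  qed
  have nn: "0 \<le> (\<Sum>\<^sub>\<infinity>(i,k). (cmod (M i k))\<^sup>2)" by (rule infsum_nonneg) auto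
  have "complex_of_real ((hs_norm (mcomp A B))\<^sup>2) = complex_of_real (\<Sum>\<^sub>\<infinity>x. (cmod (M (fst x) (snd x)))\<^sup>2)"
    using nn by (simp add: hs_norm_def M_def case_prod_unfold)
  also have "\<dots> = (\<Sum>\<^sub>\<infinity>x. complex_of_real ((cmod (M (fst x) (snd x)))\<^sup>2))"
  proof (rule infsum_bounded_linear_strong[symmetric])
    show "bounded_linear complex_of_real" by (rule bounded_linear_of_real)
    show "(\<lambda>x. complex_of_real ((cmod (M (fst x) (snd x)))\<^sup>2)) summable_on UNIV \<longleftrightarrow>
          (\<lambda>x. (cmod (M (fst x) (snd x)))\<^sup>2) summable_on UNIV"
      by (rule summable_on_bounded_linear_iff[of _ Re]) (auto intro: bounded_linear_of_real bounded_linear_Re)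
  qed
  also have "\<dots> = (\<Sum>\<^sub>\<infinity>x. \<Sum>\<^sub>\<infinity>y. F x y)" using E3 by presburger
  also have "\<dots> = (\<Sum>\<^sub>\<infinity>y. \<Sum>\<^sub>\<infinity>x. F x y)"
    using infsum_swap_banach[of F UNIV UNIV] Fsum by simp
  also have "\<dots> = (\<Sum>\<^sub>\<infinity>y. mcomp (madj A) A (snd y) (fst y) * mcomp B (madj B) (fst y) (snd y))"
    by (simp add: E5)
  finally show ?thesis .
qed

theorem mainTheorem6:
  fixes S T :: "'i::countable cmat"
  assumes "hilbert_schmidt S" and "hilbert_schmidt T"
    and "normal_op S" and "normal_op T"
    and "normal_op (mcomp S T)"
  shows "hs_norm (mcomp S T) \<le> hs_norm (mcomp T S)"
proof -
  have N1: "mcomp (madj S) S = mcomp S (madj S)" using assms(3) by (simp add: normal_op_def)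
  have N2: "mcomp T (madj T) = mcomp (madj T) T" using assms(4) by (simp add: normal_op_def)
  define P where "P = mcomp S (madj S)"
  define Q where "Q = mcomp (madj T) T"
  have e1: "complex_of_real ((hs_norm (mcomp S T))\<^sup>2) = (\<Sum>\<^sub>\<infinity>y. P (snd y) (fst y) * Q (fst y) (snd y))"
    using hs_sq[OF assms(1,2)] N1 N2 by (simp add: P_def Q_def)
  have e2: "complex_of_real ((hs_norm (mcomp T S))\<^sup>2) = (\<Sum>\<^sub>\<infinity>y. Q (snd y) (fst y) * P (fst y) (snd y))"
    using hs_sq[OF assms(2,1)] N1 N2 by (simp add: P_def Q_def)
  also have "\<dots> = (\<Sum>\<^sub>\<infinity>y. Q (snd (prod.swap y)) (fst (prod.swap y)) * P (fst (prod.swap y)) (snd (prod.swap y)))"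
    using infsum_reindex_bij_betw[of prod.swap UNIV UNIV "\<lambda>y. Q (snd y) (fst y) * P (fst y) (snd y)"]
    by (simp add: bij_swap)
  also have "\<dots> = (\<Sum>\<^sub>\<infinity>y. P (snd y) (fst y) * Q (fst y) (snd y))"
    by (simp add: mult.commute)
  finally have "complex_of_real ((hs_norm (mcomp T S))\<^sup>2) = complex_of_real ((hs_norm (mcomp S T))\<^sup>2)"
    using e1 by simp
  then have "(hs_norm (mcomp T S))\<^sup>2 = (hs_norm (mcomp S T))\<^sup>2" by (simp only: of_real_eq_iff)
  moreover have "hs_norm (mcomp T S) \<ge> 0" "hs_norm (mcomp S T) \<ge> 0" unfolding hs_norm_def by (intro real_sqrt_ge_zero infsum_nonneg; auto)+
  ultimately show ?thesis by (simp add: power2_eq_iff_nonneg)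
qed

end
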